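(* Let $V$ be a vector space of dimension $n$ over a field $\mathcal{F}$, let $\Lambda=(\lambda_{i,j})_{i,j=1,\dots,n}$ be an $n\times n$ matrix all of whose entries are non-zero elements of $\mathcal{F}$, and let $\mathcal{V}=(v_1,\dots,v_n)$ be a basis of $V$. Let $\phi:V\to V$ be a map (not assumed linear) such that for every $v,w\in V$ there is an endomorphism $\phi_{v,w}$ of $V$ which is $\Lambda$-symmetric with respect to $\mathcal{V}$ and satisfies $\phi(v)=\phi_{v,w}(v)$ and $\phi(w)=\phi_{v,w}(w)$. Then $\phi$ is linear.
   Context: For a linear map $\psi:V\to V$, its matrix with respect to $\mathcal{V}$ is $(x_{i,j})_{i,j=1}^n$ where $\psi(v_j)=\sum_{i=1}^n x_{i,j}v_i$. An endomorphism $\psi$ is called $\Lambda$-symmetric with respect to $\mathcal{V}$ if its matrix with respect to $\mathcal{V}$ has the form $(\lambda_{i,j}a_{i,j})_{i,j=1}^n$ for some symmetric matrix $A=(a_{i,j})$ (i.e. $a_{i,j}=a_{j,i}$ for all $i,j$). *)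

theory Defs
  imports Main "HOL.Vector_Spaces"
begin

text \<open>Vector space V: the whole carrier type 'b with scalar multiplication
  scale over the field 'a (locale vector_space). A basis indexed by 1..n.\<close>

definition is_indexed_basis ::
  "('a::field \<Rightarrow> 'b::ab_group_add \<Rightarrow> 'b) \<Rightarrow> nat \<Rightarrow> (nat \<Rightarrow> 'b) \<Rightarrow> bool" where
  "is_indexed_basis scale n v \<longleftrightarrow>
     inj_on v {1..n} \<and>
     \<not> module.dependent scale (v ` {1..n}) \<and>
     module.span scale (v ` {1..n}) = UNIV"

definition lambda_symmetric ::
  "('a::field \<Rightarrow> 'b::ab_group_add \<Rightarrow> 'b) \<Rightarrow> nat \<Rightarrow> (nat \<Rightarrow> nat \<Rightarrow> 'a) \<Rightarrow> (nat \<Rightarrow> 'b)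
     \<Rightarrow> ('b \<Rightarrow> 'b) \<Rightarrow> bool" where
  "lambda_symmetric scale n lam v psi \<longleftrightarrow>
     Vector_Spaces.linear scale scale psi \<and>
     (\<exists>a :: nat \<Rightarrow> nat \<Rightarrow> 'a.
        (\<forall>i\<in>{1..n}. \<forall>j\<in>{1..n}. a i j = a j i) \<and>
        (\<forall>j\<in>{1..n}. psi (v j) = (\<Sum>i\<in>{1..n}. scale (lam i j * a i j) (v i))))"

end

theory Submission
  imports Defs
begin

theorem theorem2p3:
  fixes scale :: "'a::field \<Rightarrow> 'b::ab_group_add \<Rightarrow> 'b"
    and n :: nat
    and lam :: "nat \<Rightarrow> nat \<Rightarrow> 'a"
    and v :: "nat \<Rightarrow> 'b"
    and \<phi> :: "'b \<Rightarrow> 'b"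
  assumes "vector_space scale"
    and "\<forall>i\<in>{1..n}. \<forall>j\<in>{1..n}. lam i j \<noteq> 0"
    and "is_indexed_basis scale n v"
    and "\<forall>x y. \<exists>\<psi>. lambda_symmetric scale n lam v \<psi> \<and> \<phi> x = \<psi> x \<and> \<phi> y = \<psi> y"
  shows "Vector_Spaces.linear scale scale \<phi>"
proof -
  interpret vs: vector_space scale by fact
  define B where "B = v ` {1..n}"
  have inj: "inj_on v {1..n}" and ind: "\<not> vs.dependent B" and sp: "vs.span B = UNIV"
    using assms(3) unfolding is_indexed_basis_def B_def by auto
  define co where "co k x = vs.representation B x (v k)" for k x
  have co_add: "co k (x + y) = co k x + co k y" for k x y
    unfolding co_def using vs.representation_add[OF ind] sp by auto
  have co_scale: "co k (scale c x) = c * co k x" for k c x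
    unfolding co_def using vs.representation_scale[OF ind] sp by auto
  have sumrep: "x = (\<Sum>k\<in>{1..n}. scale (co k x) (v k))" for x
  proof -
    have "(\<Sum>b\<in>B. scale (vs.representation B x b) b) = x"
      using vs.sum_representation_eq[OF ind, of x B] sp B_def by auto
    then show ?thesis unfolding co_def B_def sum.reindex[OF inj] o_def by simp
  qed
  have co_comb: "co k (\<Sum>i\<in>{1..n}. scale (c i) (v i)) = c k" if k: "k \<in> {1..n}" for c k
  proof -
    have "co k (\<Sum>i\<in>{1..n}. scale (c i) (v i)) = (\<Sum>i\<in>{1..n}. c i * co k (v i))"
      unfolding co_def using sp by (simp add: vs.representation_sum[OF ind] vs.representation_scale[OF ind])
    also have "\<dots> = (\<Sum>i\<in>{1..n}. if i = k then c i else 0)"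
    proof (rule sum.cong)
      fix i assume i: "i \<in> {1..n}"
      have "co k (v i) = (if v k = v i then 1 else 0)"
        unfolding co_def using vs.representation_basis[OF ind, of "v i"] i B_def by auto
      then show "c i * co k (v i) = (if i = k then c i else 0)"
        using inj i k by (auto dest: inj_onD)
    qed simp
    also have "\<dots> = c k" using k by simp
    finally show ?thesis .
  qed
  have ext: "x = y" if "\<And>k. k \<in> {1..n} \<Longrightarrow> co k x = co k y" for x y
    using sumrep[of x] sumrep[of y] that by (metis (no_types, lifting) sum.cong)
  have main: "co k (\<phi> x) = (\<Sum>j\<in>{1..n}. (lam k j / lam j k) * co j (\<phi> (v k)) * co j x)"
    if k: "k \<in> {1..n}" for k x
  proof -
    obtain \<psi> where lin: "Vector_Spaces.linear scale scale \<psi>"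
      and a: "\<exists>a. (\<forall>i\<in>{1..n}. \<forall>j\<in>{1..n}. a i j = a j i) \<and>
        (\<forall>j\<in>{1..n}. \<psi> (v j) = (\<Sum>i\<in>{1..n}. scale (lam i j * a i j) (v i)))"
      and e1: "\<phi> x = \<psi> x" and e2: "\<phi> (v k) = \<psi> (v k)"
      using assms(4) unfolding lambda_symmetric_def by blast
    then obtain a where sym: "\<forall>i\<in>{1..n}. \<forall>j\<in>{1..n}. a i j = a j i"
      and psv: "\<forall>j\<in>{1..n}. \<psi> (v j) = (\<Sum>i\<in>{1..n}. scale (lam i j * a i j) (v i))" by blast
    interpret L: linear scale scale \<psi> by fact
    have "\<psi> x = \<psi> (\<Sum>j\<in>{1..n}. scale (co j x) (v j))" using sumrep[of x] by simp
    also have "\<dots> = (\<Sum>j\<in>{1..n}. scale (co j x) (\<psi> (v j)))"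
      by (simp add: L.sum L.scale)
    also have "\<dots> = (\<Sum>j\<in>{1..n}. (\<Sum>i\<in>{1..n}. scale (co j x * (lam i j * a i j)) (v i)))"
      using psv by (simp add: vs.scale_sum_right)
    also have "\<dots> = (\<Sum>i\<in>{1..n}. scale (\<Sum>j\<in>{1..n}. co j x * (lam i j * a i j)) (v i))"
      by (subst sum.swap) (simp add: vs.scale_sum_left)
    finally have "co k (\<psi> x) = (\<Sum>j\<in>{1..n}. co j x * (lam k j * a k j))"
      using co_comb[OF k] by simp
    also have "\<dots> = (\<Sum>j\<in>{1..n}. (lam k j / lam j k) * co j (\<phi> (v k)) * co j x)"
    proof (rule sum.cong)
      fix j assume j: "j \<in> {1..n}"
      have "co j (\<phi> (v k)) = lam j k * a j k" using e2 psv k co_comb[OF j] by simp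
      moreover have "lam j k \<noteq> 0" using assms(2) j k by auto
      ultimately show "co j x * (lam k j * a k j) = (lam k j / lam j k) * co j (\<phi> (v k)) * co j x"
        using sym j k by (simp add: field_simps)
    qed simp
    finally show ?thesis using e1 by simp
  qed
  have add: "\<phi> (x + y) = \<phi> x + \<phi> y" for x y
  proof (rule ext)
    fix k assume k: "k \<in> {1..n}"
    show "co k (\<phi> (x + y)) = co k (\<phi> x + \<phi> y)"
      unfolding co_add main[OF k, of "x+y"] main[OF k, of x] main[OF k, of y]
      by (simp add: co_add sum.distrib[symmetric] ring_distribs add_divide_distrib)
  qed
  have scl: "\<phi> (scale c x) = scale c (\<phi> x)" for c x
  proof (rule ext)
    fix k assume k: "k \<in> {1..n}"
    show "co k (\<phi> (scale c x)) = co k (scale c (\<phi> x))"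
      unfolding co_scale main[OF k, of "scale c x"] main[OF k, of x]
      by (simp add: co_scale sum_distrib_left algebra_simps)
  qed
  show ?thesis
    unfolding module_hom_iff_linear[symmetric] module_hom_iff
    using add scl vs.module_axioms by auto
qed

end
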